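(* Let $\mathcal{A}_l\subseteq\mathcal{A}$ be nonempty and $\alpha\in[0,1)$. Consider $$\mathcal{P}(\mathcal{A}_l,\alpha)=\min_{H\succ0}\ -\log\det(H)\quad\text{s.t.}\quad(1-\alpha)a^\top Ha+\alpha\,\mathrm{Tr}(V_{\pi_{\mathrm{off}}}H)\le d\ \ \forall a\in\mathcal{A}_l,$$ and $$\mathcal{D}(\mathcal{A}_l,\alpha)=\max_{\pi\in\Delta(\mathcal{A}_l)}\log\det\big((1-\alpha)V_\pi+\alpha V_{\pi_{\mathrm{off}}}\big).$$ Then $\mathcal{P}(\mathcal{A}_l,\alpha)=\mathcal{D}(\mathcal{A}_l,\alpha)$.
   Context: $\mathcal{A}\subset\mathbb{R}^d$ is a finite set with $\mathrm{span}(\mathcal{A})=\mathbb{R}^d$; $\pi_{\mathrm{off}}\in\Delta(\mathcal{A})$; $\Delta(\mathcal{B})$ is the probability simplex over $\mathcal{B}$; $V_\pi=\sum_a\pi(a)aa^\top$. *)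

theory Defs
  imports "HOL-Analysis.Analysis"
begin

definition outer :: "real^'n \<Rightarrow> real^'n^'n" where
  "outer a = (\<chi> i j. a $ i * a $ j)"

definition Vmat :: "(real^'n \<Rightarrow> real) \<Rightarrow> (real^'n) set \<Rightarrow> real^'n^'n" where
  "Vmat p S = (\<Sum>a\<in>S. p a *\<^sub>R outer a)"

definition prob_simplex :: "'a set \<Rightarrow> ('a \<Rightarrow> real) set" where
  "prob_simplex S = {p. (\<forall>a\<in>S. 0 \<le> p a) \<and> (\<forall>a. a \<notin> S \<longrightarrow> p a = 0) \<and> sum p S = 1}"

definition pos_def :: "real^'n^'n \<Rightarrow> bool" where
  "pos_def H \<longleftrightarrow> transpose H = H \<and> (\<forall>x. x \<noteq> 0 \<longrightarrow> x \<bullet> (H *v x) > 0)"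

definition logdet :: "real^'n^'n \<Rightarrow> ereal" where
  "logdet M = (if det M > 0 then ereal (ln (det M)) else -\<infinity>)"

definition primal_val ::
  "(real^'n \<Rightarrow> real) \<Rightarrow> (real^'n) set \<Rightarrow> (real^'n) set \<Rightarrow> real \<Rightarrow> ereal" where
  "primal_val pi_off A Al \<alpha> =
     (INF H \<in> {H. pos_def H \<and>
                 (\<forall>a\<in>Al. (1 - \<alpha>) * (a \<bullet> (H *v a)) + \<alpha> * trace (Vmat pi_off A ** H) \<le> real CARD('n))}.
        - logdet H)"

definition dual_val ::
  "(real^'n \<Rightarrow> real) \<Rightarrow> (real^'n) set \<Rightarrow> (real^'n) set \<Rightarrow> real \<Rightarrow> ereal" where
  "dual_val pi_off A Al \<alpha> =
     (SUP p \<in> prob_simplex Al. logdet ((1 - \<alpha>) *\<^sub>R Vmat p Al + \<alpha> *\<^sub>R Vmat pi_off A))"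

end

theory Submission
  imports Defs
begin

lemma lagrange_aux:
  fixes b c :: real
  assumes "\<And>t. 2 * t * b + t^2 * c \<le> 0"
  shows "b = 0"
proof (rule ccontr)
  assume b: "b \<noteq> 0"
  define k where "k = \<bar>c\<bar> + 1"
  have "- c \<le> \<bar>c\<bar>" by simp
  have k1: "k > 0" unfolding k_def by simp
  have k2: "2 * k + c > 0" unfolding k_def by (smt (verit) abs_ge_zero abs_ge_minus_self)
  note k = k1 k2
  define t where "t = b / k"
  have "2 * t * b + t^2 * c = b^2 * (2 * k + c) / k^2"
    unfolding t_def using k by (simp add: field_simps power2_eq_square)
  moreover have "b^2 * (2 * k + c) / k^2 > 0" using b k by simp
  moreover have "2 * t * b + t^2 * c \<le> 0" by (rule assms)
  ultimately show False by linarith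
qed

lemma sym_inner:
  fixes A :: "real^'n^'n"
  assumes "transpose A = A"
  shows "x \<bullet> (A *v y) = y \<bullet> (A *v x)"
  by (metis assms dot_lmul_matrix inner_commute vector_transpose_matrix)

lemma spectral_subspace:
  fixes A :: "real^'n^'n"
  assumes sym: "transpose A = A"
  shows "subspace V \<Longrightarrow> (\<forall>x\<in>V. A *v x \<in> V) \<Longrightarrow>
    \<exists>B. B \<subseteq> V \<and> pairwise orthogonal B \<and> (\<forall>x\<in>B. norm x = 1 \<and> (\<exists>c. A *v x = c *\<^sub>R x)) \<and> span B = V"
proof (induction "dim V" arbitrary: V rule: less_induct)
  case less
  show ?case
  proof (cases "V \<subseteq> {0}")
    case True
    hence "V = {0}" using less.prems subspace_0 by blast
    thus ?thesis by (intro exI[of _ "{}"]) auto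
  next
    case False
    then obtain v where v: "v \<in> V" "v \<noteq> 0" by auto
    let ?S = "V \<inter> sphere 0 1"
    have "compact ?S"
      by (simp add: closed_subspace closed_Int_compact less.prems(1))
    moreover have "?S \<noteq> {}"
    proof -
      have "(1 / norm v) *\<^sub>R v \<in> ?S" using v less.prems(1)
        by (simp add: subspace_scale norm_sgn)
      thus ?thesis by blast
    qed
    moreover have "continuous_on ?S (\<lambda>x. x \<bullet> (A *v x))"
      by (intro continuous_intros linear_continuous_on matrix_vector_mul_bounded_linear)
    ultimately have "\<exists>x0\<in>?S. \<forall>y\<in>?S. y \<bullet> (A *v y) \<le> x0 \<bullet> (A *v x0)"
      by (rule continuous_attains_sup)
    then obtain x0 where x0: "x0 \<in> ?S" and mx: "\<And>y. y \<in> ?S \<Longrightarrow> y \<bullet> (A *v y) \<le> x0 \<bullet> (A *v x0)"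
      by blast
    define lam where "lam = x0 \<bullet> (A *v x0)"
    have x0V: "x0 \<in> V" and nx0: "norm x0 = 1" using x0 by auto
    have x0x0: "x0 \<bullet> x0 = 1" using nx0 by (simp add: norm_eq_1)
    have mx2: "z \<bullet> (A *v z) \<le> lam * (z \<bullet> z)" if "z \<in> V" for z
    proof (cases "z = 0")
      case True thus ?thesis by simp
    next
      case False
      hence nz: "norm z > 0" by simp
      have "(1 / norm z) *\<^sub>R z \<in> ?S" using that less.prems(1) False
        by (simp add: subspace_scale norm_sgn)
      hence "((1 / norm z) *\<^sub>R z) \<bullet> (A *v ((1 / norm z) *\<^sub>R z)) \<le> lam"
        using mx lam_def by blast
      hence "(z \<bullet> (A *v z)) / (norm z)^2 \<le> lam"
        by (simp add: matrix_vector_mult_scaleR power2_eq_square)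
      hence "z \<bullet> (A *v z) \<le> lam * (norm z)^2" using nz by (simp add: divide_le_eq)
      thus ?thesis by (simp add: power2_norm_eq_inner)
    qed
    have lag: "y \<bullet> (A *v x0) = 0" if "y \<in> V" "x0 \<bullet> y = 0" for y
    proof (rule lagrange_aux)
      fix t :: real
      have "x0 + t *\<^sub>R y \<in> V" using that x0V less.prems(1)
        by (simp add: subspace_add subspace_scale)
      hence i1: "(x0 + t *\<^sub>R y) \<bullet> (A *v (x0 + t *\<^sub>R y)) \<le> lam * ((x0 + t *\<^sub>R y) \<bullet> (x0 + t *\<^sub>R y))"
        by (rule mx2)
      have i2: "x0 \<bullet> (A *v y) = y \<bullet> (A *v x0)" by (rule sym_inner[OF sym])
      have i3: "(x0 + t *\<^sub>R y) \<bullet> (A *v (x0 + t *\<^sub>R y)) = x0 \<bullet> (A *v x0) + t * (x0 \<bullet> (A *v y)) + t * (y \<bullet> (A *v x0)) + t^2 * (y \<bullet> (A *v y))"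
        by (simp add: matrix_vector_right_distrib matrix_vector_mult_scaleR inner_add_left inner_add_right power2_eq_square distrib_left)
      have i4: "(x0 + t *\<^sub>R y) \<bullet> (x0 + t *\<^sub>R y) = 1 + t^2 * (y \<bullet> y)"
      proof -
        have "y \<bullet> x0 = 0" using that(2) by (simp only: inner_commute)
        thus ?thesis using that(2) x0x0 by (simp add: inner_add_left inner_add_right power2_eq_square)
      qed
      have "x0 \<bullet> (A *v x0) + t * (x0 \<bullet> (A *v y)) + t * (y \<bullet> (A *v x0)) + t^2 * (y \<bullet> (A *v y)) \<le> lam * (1 + t^2 * (y \<bullet> y))"
        using i1 unfolding i3 i4 .
      hence "lam + 2 * t * (y \<bullet> (A *v x0)) + t^2 * (y \<bullet> (A *v y)) \<le> lam * (1 + t^2 * (y \<bullet> y))"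
        unfolding i2 lam_def by linarith
      thus "2 * t * (y \<bullet> (A *v x0)) + t^2 * (y \<bullet> (A *v y) - lam * (y \<bullet> y)) \<le> 0"
        by (simp add: algebra_simps)
    qed
    define w where "w = A *v x0 - lam *\<^sub>R x0"
    have AV: "A *v x0 \<in> V" using less.prems(2) x0V by blast
    have wV: "w \<in> V" unfolding w_def using AV x0V less.prems(1)
      by (simp add: subspace_diff subspace_scale)
    have wx0: "x0 \<bullet> w = 0" unfolding w_def using x0x0 lam_def
      by (simp add: inner_diff_right inner_commute)
    have "w \<bullet> (A *v x0) = 0" using lag wV wx0 by blast
    hence "w \<bullet> w = 0" unfolding w_def using wx0[unfolded w_def]
      by (simp add: inner_diff_left inner_diff_right inner_commute)
    hence eig: "A *v x0 = lam *\<^sub>R x0" unfolding w_def by simp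
    define W where "W = {y \<in> V. x0 \<bullet> y = 0}"
    have subW: "subspace W" unfolding W_def using less.prems(1)
      by (auto simp: subspace_def inner_add_right)
    have invW: "\<forall>y\<in>W. A *v y \<in> W"
    proof
      fix y assume "y \<in> W"
      hence "y \<in> V" "x0 \<bullet> y = 0" unfolding W_def by auto
      moreover have "x0 \<bullet> (A *v y) = y \<bullet> (A *v x0)" by (rule sym_inner[OF sym])
      ultimately show "A *v y \<in> W" unfolding W_def using less.prems(2) eig
        by (simp add: inner_commute)
    qed
    have "x0 \<notin> W" unfolding W_def using x0x0 by simp
    hence "W \<subset> V" using x0V unfolding W_def by blast
    hence "dim W < dim V"
    proof -
      have sp: "span W = W" "span V = V" using subW less.prems(1) by (simp_all add: span_eq_iff)
      show ?thesis using dim_psubset[of W V, unfolded sp] \<open>W \<subset> V\<close> by blast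
    qed
    then obtain B' where B': "B' \<subseteq> W" "pairwise orthogonal B'"
      "\<forall>x\<in>B'. norm x = 1 \<and> (\<exists>c. A *v x = c *\<^sub>R x)" "span B' = W"
      using less.hyps subW invW by blast
    show ?thesis
    proof (intro exI[of _ "insert x0 B'"] conjI)
      show "insert x0 B' \<subseteq> V" using B'(1) x0V unfolding W_def by auto
      show "pairwise orthogonal (insert x0 B')"
        using B'(1,2) unfolding W_def
        by (auto simp: pairwise_insert orthogonal_def inner_commute)
      show "\<forall>x\<in>insert x0 B'. norm x = 1 \<and> (\<exists>c. A *v x = c *\<^sub>R x)"
        using B'(3) nx0 eig by auto
      show "span (insert x0 B') = V"
      proof
        show "span (insert x0 B') \<subseteq> V"
          using B'(1) x0V less.prems(1) unfolding W_def
          by (intro span_minimal) auto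
        show "V \<subseteq> span (insert x0 B')"
        proof
          fix z assume z: "z \<in> V"
          have "z - (x0 \<bullet> z) *\<^sub>R x0 \<in> W" unfolding W_def using z x0V x0x0 less.prems(1)
            by (simp add: subspace_diff subspace_scale inner_diff_right)
          hence "z - (x0 \<bullet> z) *\<^sub>R x0 \<in> span (insert x0 B')"
            using B'(4) span_mono[of B' "insert x0 B'"] by blast
          moreover have "(x0 \<bullet> z) *\<^sub>R x0 \<in> span (insert x0 B')"
            by (simp add: span_base span_scale)
          ultimately have "(z - (x0 \<bullet> z) *\<^sub>R x0) + (x0 \<bullet> z) *\<^sub>R x0 \<in> span (insert x0 B')"
            by (rule span_add)
          thus "z \<in> span (insert x0 B')" by simp
        qed
      qed
    qed
  qed
qed


definition dmat :: "real^'n \<Rightarrow> real^'n^'n" where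
  "dmat l = (\<chi> i j. if i = j then l$i else 0)"

lemma dmat_mult_vec: "dmat l *v y = (\<chi> i. l$i * y$i)"
proof -
  have "(\<Sum>j\<in>UNIV. (if i = j then l$i else 0) * y$j) = l$i * y$i" for i
  proof -
    have "(\<Sum>j\<in>UNIV. (if i = j then l$i else 0) * y$j) = (\<Sum>j\<in>UNIV. if j = i then l$i * y$j else 0)"
      by (rule sum.cong) auto
    thus ?thesis by simp
  qed
  thus ?thesis by (simp add: dmat_def matrix_vector_mult_def vec_eq_iff)
qed

lemma det_dmat: "det (dmat l) = (\<Prod>i\<in>UNIV. l$i)"
  by (subst det_diagonal) (auto simp: dmat_def)

lemma trace_dmat: "trace (dmat l) = (\<Sum>i\<in>UNIV. l$i)"
  by (simp add: trace_def dmat_def)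

lemma transpose_dmat: "transpose (dmat l) = dmat l"
  by (simp add: dmat_def transpose_def vec_eq_iff)

lemma spectral:
  fixes A :: "real^'n^'n"
  assumes sym: "transpose A = A"
  obtains Q l where "orthogonal_matrix Q" "A = Q ** dmat l ** transpose Q"
proof -
  obtain B where B: "pairwise orthogonal B" "\<forall>x\<in>B. norm x = 1 \<and> (\<exists>c. A *v x = c *\<^sub>R x)" "span B = UNIV"
    using spectral_subspace[OF sym, of UNIV] by auto
  have "0 \<notin> B" using B(2) by auto
  hence ind: "independent B" using B(1) pairwise_orthogonal_independent by blast
  hence finB: "finite B" using finiteI_independent by blast
  have "card B = dim (UNIV :: (real^'n) set)"
    using basis_card_eq_dim[of B UNIV] ind B(3) by auto
  hence cB: "card B = CARD('n)" by simp
  obtain f where f: "bij_betw f (UNIV::'n set) B"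
    using finite_same_card_bij[of "UNIV::'n set" B] finB cB by auto
  have nf [simp]: "\<And>i. norm (f i) = 1"
    using bij_betwE [OF f] B(2) by blast
  have of [simp]: "\<And>i j. i \<noteq> j \<Longrightarrow> orthogonal (f i) (f j)"
    using B(1) f by (auto simp: pairwise_def bij_betw_def inj_on_def)
  have "\<forall>i. \<exists>c. A *v f i = c *\<^sub>R f i" using bij_betwE [OF f] B(2) by blast
  then obtain c where c: "\<And>i. A *v f i = c i *\<^sub>R f i" by metis
  define Q where "Q = (\<chi> i j. f j $ i)"
  have oQ: "orthogonal_matrix Q"
    by (simp add: Q_def orthogonal_matrix_orthonormal_columns column_def)
  define l where "l = (\<chi> i. c i)"
  have AQ: "A ** Q = Q ** dmat l"
  proof -
    have "(A ** Q) $ i $ j = (Q ** dmat l) $ i $ j" for i j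
    proof -
      have "(A ** Q) $ i $ j = (A *v f j) $ i"
        by (simp add: Q_def matrix_matrix_mult_def matrix_vector_mult_def)
      also have "\<dots> = c j * f j $ i" by (simp add: c)
      also have "\<dots> = (Q ** dmat l) $ i $ j"
        by (simp add: Q_def matrix_matrix_mult_def dmat_def l_def if_distrib cong: if_cong)
      finally show ?thesis .
    qed
    thus ?thesis by (simp add: vec_eq_iff)
  qed
  have "A = A ** (Q ** transpose Q)" using oQ by (simp add: orthogonal_matrix_def)
  also have "\<dots> = Q ** dmat l ** transpose Q" by (simp add: matrix_mul_assoc AQ)
  finally show ?thesis using that oQ by blast
qed

lemma det_conj:
  fixes Q M :: "real^'n^'n"
  assumes "orthogonal_matrix Q"
  shows "det (Q ** M ** transpose Q) = det M"
proof -
  have h: "det Q * det Q = 1"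
  proof -
    have "det (transpose Q ** Q) = 1" using assms by (simp add: orthogonal_matrix_def)
    thus ?thesis by (simp only: det_mul det_transpose)
  qed
  have e: "det (Q ** M ** transpose Q) = det Q * det M * det Q"
    by (simp only: det_mul det_transpose)
  have "det Q * det M * det Q = det M * (det Q * det Q)" by algebra
  thus ?thesis using e h by simp
qed

lemma trace_conj:
  fixes Q M :: "real^'n^'n"
  assumes "orthogonal_matrix Q"
  shows "trace (Q ** M ** transpose Q) = trace M"
proof -
  have "trace (Q ** M ** transpose Q) = trace (Q ** (M ** transpose Q))"
    by (simp only: matrix_mul_assoc)
  also have "\<dots> = trace ((M ** transpose Q) ** Q)" by (rule trace_mul_sym)
  also have "\<dots> = trace (M ** (transpose Q ** Q))" by (simp only: matrix_mul_assoc)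
  also have "transpose Q ** Q = mat 1" using assms by (simp add: orthogonal_matrix_def)
  finally show ?thesis by simp
qed

lemma quad_conj:
  fixes P M :: "real^'n^'n"
  shows "x \<bullet> ((P ** M ** transpose P) *v x) = (transpose P *v x) \<bullet> (M *v (transpose P *v x))"
proof -
  have "x \<bullet> ((P ** M ** transpose P) *v x) = x \<bullet> (P *v (M *v (transpose P *v x)))"
    by (simp only: matrix_vector_mul_assoc matrix_mul_assoc)
  also have "\<dots> = (x v* P) \<bullet> (M *v (transpose P *v x))"
    by (rule dot_lmul_matrix[symmetric])
  also have "x v* P = transpose P *v x"
    by (metis transpose_transpose vector_transpose_matrix)
  finally show ?thesis .
qed

lemma quad_dmat: "y \<bullet> (dmat l *v y) = (\<Sum>i\<in>UNIV. l$i * (y$i)^2)"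
  by (simp add: dmat_mult_vec inner_vec_def power2_eq_square mult_ac)

lemma quad_spec:
  fixes Q :: "real^'n^'n"
  shows "x \<bullet> ((Q ** dmat l ** transpose Q) *v x) = (\<Sum>i\<in>UNIV. l$i * ((transpose Q *v x)$i)^2)"
  by (simp only: quad_conj quad_dmat)

lemma eigval_spec:
  assumes "orthogonal_matrix Q" "A = Q ** dmat l ** transpose Q"
  shows "l$i = (Q *v axis i 1) \<bullet> (A *v (Q *v axis i 1))"
proof -
  have "transpose Q *v (Q *v axis i 1) = axis i 1"
    using assms(1) by (simp add: matrix_vector_mul_assoc orthogonal_matrix_def)
  hence "(Q *v axis i 1) \<bullet> (A *v (Q *v axis i 1)) = axis i 1 \<bullet> (dmat l *v axis i 1)"
    using assms(2) quad_conj[of "Q *v axis i 1" Q "dmat l"] by simp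
  also have "\<dots> = l$i"
  proof -
    have "(\<Sum>j\<in>UNIV. l$j * ((axis i (1::real))$j)^2) = (\<Sum>j\<in>UNIV. if j = i then l$i else 0)"
      by (rule sum.cong) (auto simp: axis_def)
    thus ?thesis by (simp add: quad_dmat)
  qed
  finally show ?thesis by simp
qed

lemma norm_axis_orth:
  assumes "orthogonal_matrix Q"
  shows "norm (Q *v axis i (1::real)) = 1"
proof -
  have "Q *v axis i 1 = column i Q"
    by (simp add: column_def matrix_vector_mult_def axis_def vec_eq_iff if_distrib cong: if_cong)
  thus ?thesis using assms orthogonal_matrix_orthonormal_columns by metis
qed

lemma inner_orth:
  fixes Q :: "real^'n^'n"
  assumes "orthogonal_matrix Q"
  shows "(transpose Q *v x) \<bullet> (transpose Q *v x) = x \<bullet> x"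
proof -
  have "(transpose Q *v x) \<bullet> (transpose Q *v x) = x \<bullet> ((Q ** mat 1 ** transpose Q) *v x)"
    using quad_conj[of x Q "mat 1"] by simp
  moreover have "Q ** transpose Q = mat 1" using assms orthogonal_matrix_def by auto
  ultimately show ?thesis by simp
qed


lemma mv_sum: "(\<Sum>a\<in>S. f a) *v (y::'b::comm_semiring_1^'n) = (\<Sum>a\<in>S. f a *v y)"
  by (induction S rule: infinite_finite_induct) (auto simp: matrix_vector_mult_add_rdistrib)

lemma mm_add_rdistrib: "(A + B) ** (C::real^'n^'n) = A ** C + B ** C"
  by (simp add: matrix_matrix_mult_def vec_eq_iff distrib_right sum.distrib)

lemma mm_zero: "(0::real^'n^'n) ** C = 0"
  by (simp add: matrix_matrix_mult_def vec_eq_iff)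

lemma mm_sum: "(\<Sum>a\<in>S. f a) ** (B::real^'n^'n) = (\<Sum>a\<in>S. f a ** B)"
  by (induction S rule: infinite_finite_induct) (auto simp: mm_add_rdistrib mm_zero)

lemma trace_sum: "trace (\<Sum>a\<in>S. f a) = (\<Sum>a\<in>S. trace (f a :: real^'n^'n))"
  unfolding trace_def by (simp add: sum_component) (rule sum.swap)

lemma trace_scaleR: "trace (c *\<^sub>R (A::real^'n^'n)) = c * trace A"
  by (simp add: trace_def sum_distrib_left)

lemma transpose_sum: "transpose (\<Sum>a\<in>S. f a) = (\<Sum>a\<in>S. transpose (f a :: real^'n^'n))"
  by (simp add: transpose_def vec_eq_iff)

lemma outer_mv: "outer a *v y = (a \<bullet> y) *\<^sub>R a"
  by (simp add: outer_def matrix_vector_mult_def inner_vec_def vec_eq_iff sum_distrib_left mult_ac)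

lemma outer_quad: "y \<bullet> (outer a *v y) = (a \<bullet> y)^2"
  by (simp add: outer_mv power2_eq_square inner_commute)

lemma outer_sym: "transpose (outer a) = outer a"
  by (simp add: outer_def transpose_def vec_eq_iff mult.commute)

lemma trace_outer: "trace (outer a ** H) = a \<bullet> (H *v a)"
proof -
  have "trace (outer a ** H) = trace (H ** outer a)" by (rule trace_mul_sym)
  also have "\<dots> = (\<Sum>i\<in>UNIV. (H *v a) $ i * a $ i)"
    by (simp add: trace_def outer_def matrix_matrix_mult_def matrix_vector_mult_def sum_distrib_right sum_distrib_left mult_ac)
  also have "\<dots> = a \<bullet> (H *v a)" by (simp add: inner_vec_def mult_ac)
  finally show ?thesis .
qed

lemma Vmat_quad: "y \<bullet> (Vmat p S *v y) = (\<Sum>a\<in>S. p a * (a \<bullet> y)^2)"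
  by (simp add: Vmat_def mv_sum inner_sum_right scaleR_matrix_vector_assoc[symmetric] outer_quad)

lemma Vmat_trace: "trace (Vmat p S ** H) = (\<Sum>a\<in>S. p a * (a \<bullet> (H *v a)))"
  by (simp add: Vmat_def mm_sum trace_sum scalar_matrix_assoc[symmetric] trace_scaleR trace_outer)

lemma Vmat_sym: "transpose (Vmat p S) = Vmat p S"
  by (simp add: Vmat_def transpose_sum transpose_scalar outer_sym)

lemma dmat_mult: "dmat a ** dmat b = dmat (\<chi> i. a$i * b$i)"
proof -
  have "(\<Sum>k\<in>UNIV. (if i = k then a$i else 0) * (if k = j then b$k else 0)) = (if i = j then a$i * b$i else 0)" for i j
  proof -
    have "(\<Sum>k\<in>UNIV. (if i = k then a$i else 0) * (if k = j then b$k else 0)) = (\<Sum>k\<in>UNIV. if k = i then (if i = j then a$i * b$i else 0) else 0)"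
      by (rule sum.cong) auto
    thus ?thesis by simp
  qed
  thus ?thesis by (simp add: dmat_def matrix_matrix_mult_def vec_eq_iff)
qed

lemma psd_spec:
  fixes X :: "real^'n^'n"
  assumes "orthogonal_matrix Q" "X = Q ** dmat l ** transpose Q" "\<And>y. y \<bullet> (X *v y) \<ge> 0"
  shows "l$i \<ge> 0"
  using eigval_spec[OF assms(1,2)] assms(3) by metis

lemma pd_spec:
  fixes X :: "real^'n^'n"
  assumes "orthogonal_matrix Q" "X = Q ** dmat l ** transpose Q" "\<And>y. y \<noteq> 0 \<Longrightarrow> y \<bullet> (X *v y) > 0"
  shows "l$i > 0"
proof -
  have "Q *v axis i 1 \<noteq> 0" using norm_axis_orth[OF assms(1), of i] by auto
  thus ?thesis using eigval_spec[OF assms(1,2)] assms(3) by metis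
qed

lemma det_le_trace:
  fixes X :: "real^'n^'n"
  assumes sym: "transpose X = X" and psd: "\<And>y. y \<bullet> (X *v y) \<ge> 0"
  shows "det X \<le> (trace X / CARD('n)) ^ CARD('n)" "trace X \<ge> 0"
proof -
  obtain Q l where Q: "orthogonal_matrix Q" "X = Q ** dmat l ** transpose Q"
    using spectral[OF sym] by blast
  have l0: "\<And>i. l$i \<ge> 0" using psd_spec[OF Q psd] .
  have dX: "det X = (\<Prod>i\<in>UNIV. l$i)" using Q det_conj det_dmat by metis
  have tX: "trace X = (\<Sum>i\<in>UNIV. l$i)" using Q trace_conj trace_dmat by metis
  show "trace X \<ge> 0" unfolding tX by (simp add: sum_nonneg l0)
  let ?d = "CARD('n)"
  have am: "(\<Sum>i\<in>UNIV. l$i / ?d) \<ge> (\<Prod>i\<in>UNIV. l$i) powr (1 / ?d)"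
    by (rule arith_geom_mean) (auto simp: l0)
  have "(\<Sum>i\<in>UNIV. l$i / ?d) = trace X / ?d" unfolding tX by (simp add: sum_divide_distrib)
  with am have am2: "((\<Prod>i\<in>UNIV. l$i) powr (1 / ?d)) ^ ?d \<le> (trace X / ?d) ^ ?d"
    by (intro power_mono) auto
  have P0: "(\<Prod>i\<in>UNIV. l$i) \<ge> 0" by (simp add: prod_nonneg l0)
  have "((\<Prod>i\<in>UNIV. l$i) powr (1 / ?d)) ^ ?d = (\<Prod>i\<in>UNIV. l$i)"
  proof (cases "(\<Prod>i\<in>UNIV. l$i) = 0")
    case True
    have "CARD('n) > 0" by simp
    hence "(0::real) ^ CARD('n) = 0" by simp
    thus ?thesis unfolding True by simp
  next
    case False
    hence pos: "(\<Prod>i\<in>UNIV. l$i) > 0" using P0 by linarith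
    have "((\<Prod>i\<in>UNIV. l$i) powr (1 / ?d)) ^ ?d = ((\<Prod>i\<in>UNIV. l$i) powr (1 / ?d)) powr (real ?d)"
      by (rule powr_realpow[symmetric]) (use pos in \<open>metis powr_gt_zero less_irrefl\<close>)
    also have "\<dots> = (\<Prod>i\<in>UNIV. l$i)" using pos by (simp add: powr_powr)
    finally show ?thesis .
  qed
  with am2 show "det X \<le> (trace X / ?d) ^ ?d" unfolding dX by simp
qed

lemma pd_factor:
  fixes H :: "real^'n^'n"
  assumes "pos_def H"
  obtains R :: "real^'n^'n" where "H = R ** transpose R" "det H > 0"
proof -
  have sym: "transpose H = H" and pd: "\<And>y. y \<noteq> 0 \<Longrightarrow> y \<bullet> (H *v y) > 0"
    using assms unfolding pos_def_def by auto
  obtain Q l where Q: "orthogonal_matrix Q" "H = Q ** dmat l ** transpose Q"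
    using spectral[OF sym] by blast
  have l0: "\<And>i. l$i > 0" using pd_spec[OF Q pd] .
  define R where "R = Q ** dmat (\<chi> i. sqrt (l$i))"
  have "R ** transpose R = Q ** (dmat (\<chi> i. sqrt (l$i)) ** dmat (\<chi> i. sqrt (l$i))) ** transpose Q"
    by (simp add: R_def matrix_transpose_mul transpose_dmat matrix_mul_assoc)
  also have "dmat (\<chi> i. sqrt (l$i)) ** dmat (\<chi> i. sqrt (l$i)) = dmat l"
    using l0 by (simp add: dmat_mult less_imp_le vec_eq_iff)
  finally have "H = R ** transpose R" using Q by simp
  moreover have "det H > 0" using Q det_conj det_dmat l0 by (metis prod_pos UNIV_I)
  ultimately show ?thesis using that by blast
qed

lemma weak_core:
  fixes M H :: "real^'n^'n"
  assumes symM: "transpose M = M" and psdM: "\<And>y. y \<bullet> (M *v y) \<ge> 0"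
    and H: "pos_def H" and tr: "trace (M ** H) \<le> CARD('n)"
  shows "det M * det H \<le> 1"
proof -
  obtain R :: "real^'n^'n" where R: "H = R ** transpose R" "det H > 0" using pd_factor[OF H] by blast
  define X where "X = transpose R ** M ** R"
  have symX: "transpose X = X" unfolding X_def
    by (simp only: matrix_transpose_mul transpose_transpose symM matrix_mul_assoc)
  have psdX: "y \<bullet> (X *v y) \<ge> 0" for y
  proof -
    have "y \<bullet> (X *v y) = (R *v y) \<bullet> (M *v (R *v y))"
      using quad_conj[of y "transpose R" M] unfolding transpose_transpose X_def .
    thus ?thesis using psdM[of "R *v y"] by simp
  qed
  have "det X = det R * det M * det R" unfolding X_def by (simp only: det_mul det_transpose)
  also have "\<dots> = det M * (det R * det R)" by algebra
  also have "det R * det R = det H" using R(1) by (simp only: det_mul det_transpose)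
  finally have dX: "det X = det M * det H" .
  have "trace X = trace (R ** (transpose R ** M))" unfolding X_def
    by (rule trace_mul_sym)
  also have "\<dots> = trace ((R ** transpose R) ** M)" by (simp only: matrix_mul_assoc)
  also have "\<dots> = trace (M ** H)" unfolding R(1)[symmetric] by (rule trace_mul_sym)
  finally have tX: "trace X = trace (M ** H)" .
  have d1: "det X \<le> (trace X / CARD('n)) ^ CARD('n)" and t0: "trace X \<ge> 0"
    using det_le_trace[OF symX psdX] by auto
  have t1: "trace X / CARD('n) \<le> 1" using tX tr by (simp add: divide_le_eq)
  have "(trace X / CARD('n)) ^ CARD('n) \<le> 1 ^ CARD('n)"
    by (rule power_mono[OF t1]) (use t0 in simp)
  thus ?thesis using dX d1 by simp
qed

lemma prod_incr:
  fixes mu :: "real^'n"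
  assumes "(\<Sum>i\<in>UNIV. mu$i) > 0"
  obtains t where "0 < t" "t \<le> 1" "(\<Prod>i\<in>UNIV. 1 + t * mu$i) > 1"
proof -
  have "((\<lambda>t. \<Prod>i\<in>UNIV. 1 + t * mu$i) has_field_derivative
        (\<Sum>i\<in>UNIV. mu$i * (\<Prod>j\<in>UNIV-{i}. 1 + 0 * mu$j))) (at 0)"
    by (rule has_field_derivative_prod) (auto intro!: derivative_eq_intros)
  hence "((\<lambda>t. \<Prod>i\<in>UNIV. 1 + t * mu$i) has_field_derivative (\<Sum>i\<in>UNIV. mu$i)) (at 0)" by simp
  then obtain d where d: "d > 0" "\<And>h. h > 0 \<Longrightarrow> h < d \<Longrightarrow> (\<Prod>i\<in>UNIV. 1 + 0 * mu$i) < (\<Prod>i\<in>UNIV. 1 + (0 + h) * mu$i)"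
    using DERIV_pos_inc_right[OF _ assms] by blast
  define t where "t = min (d/2) 1"
  have "0 < t" "t \<le> 1" "t < d" using d(1) by (auto simp: t_def)
  with d(2)[of t] show ?thesis using that by simp
qed


lemma prod_ge_1_sum:
  fixes a :: "'a \<Rightarrow> real"
  assumes "finite S" "\<And>i. i \<in> S \<Longrightarrow> a i \<ge> 0"
  shows "(\<Prod>i\<in>S. 1 + a i) \<ge> 1 + (\<Sum>i\<in>S. a i)"
  using assms
proof (induction S rule: finite_induct)
  case empty thus ?case by simp
next
  case (insert x F)
  have ax: "a x \<ge> 0" using insert.prems by simp
  have IH: "(\<Prod>i\<in>F. 1 + a i) \<ge> 1 + (\<Sum>i\<in>F. a i)" using insert.IH insert.prems by simp
  have sF: "(\<Sum>i\<in>F. a i) \<ge> 0" using insert.prems by (simp add: sum_nonneg)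
  have "(1 + a x) * (1 + (\<Sum>i\<in>F. a i)) \<le> (1 + a x) * (\<Prod>i\<in>F. 1 + a i)"
    using IH ax by (intro mult_left_mono) auto
  moreover have "1 + (a x + (\<Sum>i\<in>F. a i)) \<le> (1 + a x) * (1 + (\<Sum>i\<in>F. a i))"
    using ax sF by (simp add: algebra_simps)
  ultimately show ?case using insert.hyps by simp
qed

lemma det_cont: "continuous_on S (det :: real^'n^'n \<Rightarrow> real)"
  unfolding det_def by (intro continuous_intros)

lemma dmat_affine: "dmat (\<chi> i. c + e * mu$i) = c *\<^sub>R mat 1 + e *\<^sub>R dmat mu"
  by (simp add: dmat_def mat_def vec_eq_iff)

lemma dmat_one: "dmat (\<chi> i. 1) = mat 1"
  by (simp add: dmat_def mat_def vec_eq_iff)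

lemma transpose_add': "transpose (A + B) = transpose A + transpose (B :: real^'n^'n)"
  by (simp add: transpose_def vec_eq_iff)

lemma conj_affine:
  fixes P Z :: "real^'n^'n"
  assumes "orthogonal_matrix P" "Z = P ** dmat mu ** transpose P"
  shows "(1 - t) *\<^sub>R mat 1 + t *\<^sub>R Z = P ** dmat (\<chi> i. (1 - t) + t * mu$i) ** transpose P"
proof -
  have PP: "P ** transpose P = mat 1" using assms(1) by (simp add: orthogonal_matrix_def)
  have "P ** dmat (\<chi> i. (1 - t) + t * mu$i) ** transpose P
        = P ** ((1 - t) *\<^sub>R mat 1 + t *\<^sub>R dmat mu) ** transpose P"
    by (simp add: dmat_affine)
  also have "\<dots> = (1 - t) *\<^sub>R (P ** transpose P) + t *\<^sub>R (P ** dmat mu ** transpose P)"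
    by (simp add: matrix_add_ldistrib mm_add_rdistrib matrix_scalar_ac scalar_matrix_assoc)
  finally show ?thesis using PP assms(2) by simp
qed

lemma det_conj_le:
  fixes S M :: "real^'n^'n"
  shows "det (S ** M ** transpose S) = det S * det S * det M"
  by (simp add: det_mul det_transpose)


lemma affine_comb:
  fixes P Q W :: "'a::real_vector"
  assumes "u + v = 1"
  shows "c *\<^sub>R (u *\<^sub>R P + v *\<^sub>R Q) + a *\<^sub>R W = u *\<^sub>R (c *\<^sub>R P + a *\<^sub>R W) + v *\<^sub>R (c *\<^sub>R Q + a *\<^sub>R W)"
proof -
  have "u *\<^sub>R (c *\<^sub>R P + a *\<^sub>R W) + v *\<^sub>R (c *\<^sub>R Q + a *\<^sub>R W) = c *\<^sub>R (u *\<^sub>R P + v *\<^sub>R Q) + (u + v) *\<^sub>R (a *\<^sub>R W)"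
    by (simp add: algebra_simps)
  thus ?thesis using assms by simp
qed

lemma sqrt_aux1: "(x::real) > 0 \<Longrightarrow> 1 / sqrt x * x * (1 / sqrt x) = 1"
proof -
  assume x: "x > 0"
  define r where "r = sqrt x"
  have r: "r > 0" "x = r * r" using x unfolding r_def by simp_all
  have "1 / r * (r * r) * (1 / r) = 1" using r(1) by (simp add: field_simps)
  thus ?thesis using r unfolding r_def by simp
qed

lemma sqrt_aux2: "(x::real) > 0 \<Longrightarrow> 1 / sqrt x * (1 / sqrt x) = 1 / x"
proof -
  assume x: "x > 0"
  define r where "r = sqrt x"
  have r: "r > 0" "x = r * r" using x unfolding r_def by simp_all
  have "1 / r * (1 / r) = 1 / (r * r)" using r(1) by (simp add: field_simps)
  thus ?thesis using r unfolding r_def by simp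
qed

lemma dmat_inv_sqrt:
  assumes "\<And>i. l$i > 0"
  shows "dmat (\<chi> i. 1 / sqrt (l$i)) ** dmat l ** dmat (\<chi> i. 1 / sqrt (l$i)) = mat 1"
proof -
  have e: "\<And>i. 1 / sqrt (l$i) * l$i * (1 / sqrt (l$i)) = 1" using sqrt_aux1 assms by blast
  show ?thesis unfolding dmat_mult by (simp only: vec_lambda_beta e dmat_one)
qed

lemma dmat_sqrt_sq:
  assumes "\<And>i. l$i > 0"
  shows "dmat (\<chi> i. 1 / sqrt (l$i)) ** dmat (\<chi> i. 1 / sqrt (l$i)) = dmat (\<chi> i. 1 / l$i)"
proof -
  have e: "\<And>i. 1 / sqrt (l$i) * (1 / sqrt (l$i)) = 1 / l$i" using sqrt_aux2 assms by blast
  show ?thesis unfolding dmat_mult by (simp only: vec_lambda_beta e)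
qed

theorem lemma5p1:
  fixes A Al :: "(real^'n) set" and pi_off :: "real^'n \<Rightarrow> real" and \<alpha> :: real
  assumes "finite A" and "span A = UNIV"
    and "pi_off \<in> prob_simplex A"
    and "Al \<subseteq> A" and "Al \<noteq> {}"
    and "0 \<le> \<alpha>" and "\<alpha> < 1"
  shows "primal_val pi_off A Al \<alpha> = dual_val pi_off A Al \<alpha>"
proof -
  note finA = assms(1) and po = assms(3) and AlA = assms(4) and Alne = assms(5)
    and a0 = assms(6) and a1 = assms(7)
  let ?d = "CARD('n)"
  have finAl: "finite Al" using finA AlA finite_subset by blast
  have po0: "\<And>b. b \<in> A \<Longrightarrow> pi_off b \<ge> 0" and po1: "sum pi_off A = 1"
    using po unfolding prob_simplex_def by auto
  define V0 where "V0 = Vmat pi_off A"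
  define Mp where "Mp = (\<lambda>p. (1 - \<alpha>) *\<^sub>R Vmat p Al + \<alpha> *\<^sub>R V0)"
  define N where "N = (\<lambda>a. (1 - \<alpha>) *\<^sub>R outer a + \<alpha> *\<^sub>R V0)"
  define C where "C = convex hull (N ` Al)"
  define feas where "feas = {H. pos_def H \<and>
                 (\<forall>a\<in>Al. (1 - \<alpha>) * (a \<bullet> (H *v a)) + \<alpha> * trace (Vmat pi_off A ** H) \<le> real CARD('n))}"
  have primal_eq: "primal_val pi_off A Al \<alpha> = (INF H \<in> feas. - logdet H)"
    unfolding primal_val_def feas_def ..
  have dual_eq: "dual_val pi_off A Al \<alpha> = (SUP p \<in> prob_simplex Al. logdet (Mp p))"
    unfolding dual_val_def Mp_def V0_def ..
  have V0sym: "transpose V0 = V0" unfolding V0_def by (rule Vmat_sym)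
  have V0quad: "y \<bullet> (V0 *v y) = (\<Sum>b\<in>A. pi_off b * (b \<bullet> y)^2)" for y
    unfolding V0_def by (rule Vmat_quad)
  have V0psd: "y \<bullet> (V0 *v y) \<ge> 0" for y
    unfolding V0quad using po0 by (simp add: sum_nonneg)
  have Mp_sum: "Mp p = (\<Sum>a\<in>Al. p a *\<^sub>R N a)" if "p \<in> prob_simplex Al" for p
  proof -
    have sp: "sum p Al = 1" using that unfolding prob_simplex_def by auto
    have "(\<Sum>a\<in>Al. p a *\<^sub>R N a) = (1 - \<alpha>) *\<^sub>R (\<Sum>a\<in>Al. p a *\<^sub>R outer a) + (\<Sum>a\<in>Al. p a) *\<^sub>R (\<alpha> *\<^sub>R V0)"
      unfolding N_def by (simp add: scaleR_add_right sum.distrib scaleR_sum_right scaleR_sum_left sum_distrib_right sum_distrib_left mult.commute)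
    thus ?thesis unfolding Mp_def Vmat_def sp by simp
  qed
  have Mp_sym: "transpose (Mp p) = Mp p" for p
    unfolding Mp_def by (simp add: transpose_add' transpose_scalar Vmat_sym V0sym)
  have Mp_quad: "y \<bullet> (Mp p *v y) = (1 - \<alpha>) * (\<Sum>a\<in>Al. p a * (a \<bullet> y)^2) + \<alpha> * (\<Sum>b\<in>A. pi_off b * (b \<bullet> y)^2)" for p y
    unfolding Mp_def
    by (simp add: matrix_vector_mult_add_rdistrib scaleR_matrix_vector_assoc[symmetric] inner_add_right Vmat_quad V0quad)
  have Mp_psd: "y \<bullet> (Mp p *v y) \<ge> 0" if "p \<in> prob_simplex Al" for p y
  proof -
    have "\<forall>a\<in>Al. p a \<ge> 0" using that unfolding prob_simplex_def by auto
    hence "(\<Sum>a\<in>Al. p a * (a \<bullet> y)^2) \<ge> 0" by (simp add: sum_nonneg)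
    moreover have "(\<Sum>b\<in>A. pi_off b * (b \<bullet> y)^2) \<ge> 0" using po0 by (simp add: sum_nonneg)
    ultimately show ?thesis unfolding Mp_quad using a0 a1 by simp
  qed
  have N_trace: "trace (N a ** H) = (1 - \<alpha>) * (a \<bullet> (H *v a)) + \<alpha> * trace (V0 ** H)" for a H
    unfolding N_def by (simp add: mm_add_rdistrib scalar_matrix_assoc[symmetric] trace_add trace_scaleR trace_outer)
  have Mp_trace: "trace (Mp p ** H) = (\<Sum>a\<in>Al. p a * trace (N a ** H))" if "p \<in> prob_simplex Al" for p H
    unfolding Mp_sum[OF that] by (simp add: mm_sum trace_sum scalar_matrix_assoc[symmetric] trace_scaleR)
  define delta where "delta = (\<lambda>(a::real^'n) b. if b = a then (1::real) else 0)"
  have delta_simp: "delta a \<in> prob_simplex Al" if "a \<in> Al" for a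
    using that finAl unfolding delta_def prob_simplex_def by auto
  have N_Mp: "N a = Mp (delta a)" if "a \<in> Al" for a
  proof -
    have "(\<Sum>b\<in>Al. delta a b *\<^sub>R N b) = N a" using that finAl unfolding delta_def
      by (simp add: if_distrib[of "\<lambda>c. c *\<^sub>R _"] sum.delta cong: if_cong)
    thus ?thesis using Mp_sum[OF delta_simp[OF that]] by simp
  qed
  have C_eq: "C = Mp ` prob_simplex Al"
  proof
    show "Mp ` prob_simplex Al \<subseteq> C"
    proof
      fix M assume "M \<in> Mp ` prob_simplex Al"
      then obtain p where p: "p \<in> prob_simplex Al" "M = Mp p" by blast
      have "(\<Sum>a\<in>Al. p a *\<^sub>R N a) \<in> C" unfolding C_def
        by (rule convex_sum) (use finAl p(1) in \<open>auto simp: prob_simplex_def hull_inc\<close>)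
      thus "M \<in> C" using Mp_sum[OF p(1)] p(2) by simp
    qed
    show "C \<subseteq> Mp ` prob_simplex Al" unfolding C_def
    proof (rule hull_minimal)
      show "N ` Al \<subseteq> Mp ` prob_simplex Al" using N_Mp delta_simp by blast
      show "convex (Mp ` prob_simplex Al)"
        unfolding convex_def
      proof (intro ballI allI impI)
        fix X Y u v assume XY: "X \<in> Mp ` prob_simplex Al" "Y \<in> Mp ` prob_simplex Al"
          and uv: "0 \<le> (u::real)" "0 \<le> v" "u + v = 1"
        then obtain p q where pq: "p \<in> prob_simplex Al" "q \<in> prob_simplex Al" "X = Mp p" "Y = Mp q" by blast
        define r where "r = (\<lambda>b. u * p b + v * q b)"
        have "r \<in> prob_simplex Al" using pq(1,2) uv unfolding r_def prob_simplex_def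
          by (auto simp: sum.distrib sum_distrib_left[symmetric])
        moreover have "Mp r = u *\<^sub>R X + v *\<^sub>R Y"
        proof -
          have "Vmat r Al = u *\<^sub>R Vmat p Al + v *\<^sub>R Vmat q Al"
            unfolding Vmat_def r_def by (simp add: scaleR_add_left sum.distrib scaleR_sum_right)
          thus ?thesis unfolding pq(3,4) Mp_def using affine_comb[OF uv(3)] by simp
        qed
        ultimately show "u *\<^sub>R X + v *\<^sub>R Y \<in> Mp ` prob_simplex Al" by force
      qed
    qed
  qed
  have weak: "(SUP p \<in> prob_simplex Al. logdet (Mp p)) \<le> (INF H \<in> feas. - logdet H)"
  proof (intro SUP_least INF_greatest)
    fix p H assume p: "p \<in> prob_simplex Al" and H: "H \<in> feas"
    show "logdet (Mp p) \<le> - logdet H"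
    proof (cases "det (Mp p) > 0")
      case False thus ?thesis unfolding logdet_def by simp
    next
      case True
      have Hpd: "pos_def H" using H unfolding feas_def by simp
      obtain R where "det H > 0" using pd_factor[OF Hpd] by blast
      have "trace (Mp p ** H) \<le> (\<Sum>a\<in>Al. p a * ?d)"
        unfolding Mp_trace[OF p]
      proof (rule sum_mono)
        fix a assume a: "a \<in> Al"
        have "trace (N a ** H) \<le> ?d" using H a unfolding feas_def N_trace V0_def by auto
        moreover have "p a \<ge> 0" using p a unfolding prob_simplex_def by auto
        ultimately show "p a * trace (N a ** H) \<le> p a * ?d" by (rule mult_left_mono)
      qed
      also have "\<dots> = ?d" using p unfolding prob_simplex_def by (simp add: sum_distrib_right[symmetric])
      finally have "det (Mp p) * det H \<le> 1"
        using weak_core[OF Mp_sym Mp_psd[OF p] Hpd] by simp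
      hence "ln (det (Mp p) * det H) \<le> 0" using True \<open>det H > 0\<close> by simp
      hence "ln (det (Mp p)) \<le> - ln (det H)" using True \<open>det H > 0\<close> by (simp add: ln_mult)
      thus ?thesis unfolding logdet_def using True \<open>det H > 0\<close> by simp
    qed
  qed
  have Ccomp: "compact C" unfolding C_def by (rule finite_imp_compact_convex_hull) (use finAl in simp)
  have Cne: "C \<noteq> {}" using Alne unfolding C_def by simp
  have "\<exists>Ms\<in>C. \<forall>M\<in>C. det M \<le> det Ms"
    by (rule continuous_attains_sup[OF Ccomp Cne det_cont])
  then obtain Ms where Ms: "Ms \<in> C" "\<And>M. M \<in> C \<Longrightarrow> det M \<le> det Ms" by blast
  obtain ps where ps: "ps \<in> prob_simplex Al" "Ms = Mp ps" using Ms(1) C_eq by blast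
  have detC: "det (Mp p) \<le> det Ms" if "p \<in> prob_simplex Al" for p using Ms(2) C_eq that by blast
  have NC: "N a \<in> C" if "a \<in> Al" for a unfolding C_def using that by (simp add: hull_inc)
  have convC: "convex C" unfolding C_def by simp
  have N_sym: "transpose (N a) = N a" if "a \<in> Al" for a using N_Mp[OF that] Mp_sym by simp
  have N_psd: "y \<bullet> (N a *v y) \<ge> 0" if "a \<in> Al" for a y using N_Mp[OF that] Mp_psd[OF delta_simp[OF that]] by simp
  have Ms_sym: "transpose Ms = Ms" using Mp_sym ps(2) by simp
  have Ms_psd: "\<And>y. y \<bullet> (Ms *v y) \<ge> 0" using Mp_psd[OF ps(1)] ps(2) by simp
  have strong: "(INF H \<in> feas. - logdet H) \<le> (SUP p \<in> prob_simplex Al. logdet (Mp p))"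
  proof (cases "det Ms > 0")
    case True
    obtain Q l where Q: "orthogonal_matrix Q" "Ms = Q ** dmat l ** transpose Q"
      using spectral[OF Ms_sym] by blast
    have l0: "\<And>i. l$i \<ge> 0" using psd_spec[OF Q Ms_psd] .
    have dMs: "det Ms = (\<Prod>i\<in>UNIV. l$i)" using Q det_conj det_dmat by metis
    have lpos: "l$i > 0" for i
    proof (rule ccontr)
      assume "\<not> l$i > 0" hence "l$i = 0" using l0[of i] by simp
      hence "(\<Prod>i\<in>UNIV. l$i) = 0" by (intro prod_zero) auto
      thus False using True dMs by linarith
    qed
    define D where "D = dmat (\<chi> i. 1 / sqrt (l$i))"
    define H where "H = Q ** dmat (\<chi> i. 1 / l$i) ** transpose Q"
    define S where "S = D ** transpose Q"
    have QtQ: "transpose Q ** Q = mat 1" and QQt: "Q ** transpose Q = mat 1"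
      using Q(1) by (auto simp: orthogonal_matrix_def)
    have tS: "transpose S = Q ** D" unfolding S_def D_def
      by (simp only: matrix_transpose_mul transpose_transpose transpose_dmat)
    have SMS: "S ** Ms ** transpose S = mat 1"
    proof -
      have "S ** Ms ** transpose S = D ** (transpose Q ** Q) ** dmat l ** (transpose Q ** Q) ** D"
        unfolding tS unfolding S_def Q(2) by (simp only: matrix_mul_assoc)
      also have "\<dots> = D ** dmat l ** D" unfolding QtQ by simp
      also have "\<dots> = mat 1" unfolding D_def by (rule dmat_inv_sqrt[OF lpos])
      finally show ?thesis .
    qed
    have StS: "transpose S ** S = H"
    proof -
      have "transpose S ** S = Q ** (D ** D) ** transpose Q"
        unfolding tS by (simp only: S_def matrix_mul_assoc)
      also have "D ** D = dmat (\<chi> i. 1 / l$i)" unfolding D_def by (rule dmat_sqrt_sq[OF lpos])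
      finally show ?thesis unfolding H_def .
    qed
    have dH: "det H = 1 / det Ms"
    proof -
      have "det H = det (dmat (\<chi> i. 1 / l$i))" unfolding H_def by (rule det_conj[OF Q(1)])
      also have "\<dots> = (\<Prod>i\<in>UNIV. (\<chi> i. 1 / l$i)$i)" by (rule det_dmat)
      also have "\<dots> = (\<Prod>i\<in>UNIV. 1 / l$i)" by simp
      also have "\<dots> = 1 / (\<Prod>i\<in>UNIV. l$i)" by (simp add: prod_dividef)
      finally show ?thesis using dMs by simp
    qed
    have Hsym: "transpose H = H" unfolding H_def
      by (simp only: matrix_transpose_mul transpose_transpose transpose_dmat matrix_mul_assoc)
    have Hpd: "pos_def H" unfolding pos_def_def
    proof (intro conjI allI impI Hsym)
      fix x :: "real^'n" assume x: "x \<noteq> 0"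
      have "(transpose Q *v x) \<bullet> (transpose Q *v x) = x \<bullet> x" by (rule inner_orth[OF Q(1)])
      hence "transpose Q *v x \<noteq> 0" using x by auto
      then obtain j where j: "(transpose Q *v x) $ j \<noteq> 0" by (metis vec_eq_iff zero_index)
      have "x \<bullet> (H *v x) = (\<Sum>i\<in>UNIV. (\<chi> i. 1 / l$i)$i * ((transpose Q *v x)$i)^2)"
        unfolding H_def by (rule quad_spec)
      also have "\<dots> > 0"
      proof (rule sum_pos2[of UNIV j])
        show "0 < (\<chi> i. 1 / l$i)$j * ((transpose Q *v x)$j)^2" using j lpos[of j] by simp
        show "\<And>i. i \<in> UNIV \<Longrightarrow> 0 \<le> (\<chi> i. 1 / l$i)$i * ((transpose Q *v x)$i)^2"
          using lpos by (simp add: less_imp_le)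
      qed auto
      finally show "x \<bullet> (H *v x) > 0" .
    qed
    have Hfeas: "trace (N a ** H) \<le> ?d" if a: "a \<in> Al" for a
    proof (rule ccontr)
      assume gt: "\<not> trace (N a ** H) \<le> ?d"
      define Z where "Z = S ** N a ** transpose S"
      have Zsym: "transpose Z = Z" unfolding Z_def
        by (simp only: matrix_transpose_mul transpose_transpose N_sym[OF a] matrix_mul_assoc)
      have trZ: "trace Z = trace (N a ** H)"
      proof -
        have "trace Z = trace (S ** (N a ** transpose S))" unfolding Z_def by (simp only: matrix_mul_assoc)
        also have "\<dots> = trace ((N a ** transpose S) ** S)" by (rule trace_mul_sym)
        also have "\<dots> = trace (N a ** (transpose S ** S))" by (simp only: matrix_mul_assoc)
        finally show ?thesis unfolding StS .
      qed
      obtain P mu where P: "orthogonal_matrix P" "Z = P ** dmat mu ** transpose P"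
        using spectral[OF Zsym] by blast
      have "trace Z = (\<Sum>i\<in>UNIV. mu$i)" using P trace_conj trace_dmat by metis
      hence "(\<Sum>i\<in>UNIV. (\<chi> i. mu$i - 1)$i) > 0" using gt trZ by (simp add: sum_subtractf)
      then obtain t where t: "0 < t" "t \<le> 1" "(\<Prod>i\<in>UNIV. 1 + t * (\<chi> i. mu$i - 1)$i) > 1"
        using prod_incr by blast
      define Mt where "Mt = (1 - t) *\<^sub>R Ms + t *\<^sub>R N a"
      have "Mt \<in> C" unfolding Mt_def using convC Ms(1) NC[OF a] t by (intro convexD) auto
      hence dMt: "det Mt \<le> det Ms" by (rule Ms(2))
      have "S ** Mt ** transpose S = (1 - t) *\<^sub>R (S ** Ms ** transpose S) + t *\<^sub>R (S ** N a ** transpose S)"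
        unfolding Mt_def
        by (simp add: matrix_add_ldistrib mm_add_rdistrib matrix_scalar_ac scalar_matrix_assoc[symmetric] matrix_mul_assoc)
      also have "\<dots> = P ** dmat (\<chi> i. (1 - t) + t * mu$i) ** transpose P"
        unfolding SMS Z_def[symmetric] by (rule conj_affine[OF P])
      finally have "det (S ** Mt ** transpose S) = det (dmat (\<chi> i. (1 - t) + t * mu$i))"
        using det_conj[OF P(1)] by simp
      also have "\<dots> = (\<Prod>i\<in>UNIV. (\<chi> i. (1 - t) + t * mu$i)$i)" by (rule det_dmat)
      finally have e1: "det (S ** Mt ** transpose S) = (\<Prod>i\<in>UNIV. (1 - t) + t * mu$i)" by simp
      have e2: "det (S ** Mt ** transpose S) = det S * det S * det Mt" by (rule det_conj_le)
      have e3: "det S * det S * det Ms = 1" using SMS det_conj_le[of S Ms] by simp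
      have e4: "det S * det S \<ge> 0" by simp
      have "det S * det S * det Mt \<le> det S * det S * det Ms" using dMt e4 by (rule mult_left_mono)
      hence "(\<Prod>i\<in>UNIV. (1 - t) + t * mu$i) \<le> 1" using e1 e2 e3 by linarith
      moreover have "(\<Prod>i\<in>UNIV. (1 - t) + t * mu$i) = (\<Prod>i\<in>UNIV. 1 + t * (\<chi> i. mu$i - 1)$i)"
        by (simp add: algebra_simps)
      ultimately show False using t(3) by simp
    qed
    have "H \<in> feas" unfolding feas_def using Hpd Hfeas N_trace unfolding V0_def by auto
    hence "(INF H \<in> feas. - logdet H) \<le> - logdet H" by (rule INF_lower)
    also have "- logdet H = logdet (Mp ps)"
    proof -
      have "det H > 0" using dH True by simp
      hence "logdet H = ereal (ln (1 / det Ms))" unfolding logdet_def dH by simp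
      also have "ln (1 / det Ms) = - ln (det Ms)" using True by (simp add: ln_div)
      finally have "- logdet H = ereal (ln (det Ms))" by simp
      thus ?thesis unfolding logdet_def using True ps(2) by simp
    qed
    also have "\<dots> \<le> (SUP p \<in> prob_simplex Al. logdet (Mp p))" using ps(1) by (rule SUP_upper)
    finally show ?thesis .
  next
    case False
    have dneg: "det (Mp p) \<le> 0" if "p \<in> prob_simplex Al" for p using detC[OF that] False by linarith
    define p0 where "p0 = (\<lambda>b. if b \<in> Al then 1 / real (card Al) else 0)"
    have cpos: "card Al > 0" using finAl Alne by (simp add: card_gt_0_iff)
    have p0nn: "p0 b \<ge> 0" for b unfolding p0_def by simp
    have p0s: "p0 \<in> prob_simplex Al"
    proof -
      have "sum p0 Al = (\<Sum>b\<in>Al. 1 / real (card Al))" unfolding p0_def by (rule sum.cong) auto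
      also have "\<dots> = 1" using cpos by simp
      finally show ?thesis unfolding prob_simplex_def using p0nn by (auto simp: p0_def)
    qed
    obtain Q l where Q: "orthogonal_matrix Q" "Mp p0 = Q ** dmat l ** transpose Q"
      using spectral[OF Mp_sym] by blast
    have l0: "\<And>i. l$i \<ge> 0" using psd_spec[OF Q Mp_psd[OF p0s]] .
    have "(\<Prod>i\<in>UNIV. l$i) = det (Mp p0)" using Q det_conj det_dmat by metis
    hence "(\<Prod>i\<in>UNIV. l$i) \<le> 0" using dneg[OF p0s] by linarith
    moreover have "(\<Prod>i\<in>UNIV. l$i) \<ge> 0" by (rule prod_nonneg) (simp add: l0)
    ultimately have "(\<Prod>i\<in>UNIV. l$i) = 0" by linarith
    then obtain j where j: "l$j = 0" by (auto simp: prod_zero_iff)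
    define x where "x = Q *v axis j 1"
    have nx: "norm x = 1" unfolding x_def by (rule norm_axis_orth[OF Q(1)])
    have xx: "x \<bullet> x = 1" using nx by (simp add: norm_eq_1)
    have "x \<bullet> (Mp p0 *v x) = 0" using eigval_spec[OF Q, of j] j unfolding x_def by simp
    hence q0: "(1 - \<alpha>) * (\<Sum>a\<in>Al. p0 a * (a \<bullet> x)^2) + \<alpha> * (\<Sum>b\<in>A. pi_off b * (b \<bullet> x)^2) = 0"
      unfolding Mp_quad .
    have S1: "(\<Sum>a\<in>Al. p0 a * (a \<bullet> x)^2) \<ge> 0" using p0nn by (intro sum_nonneg) simp
    have S2: "(\<Sum>b\<in>A. pi_off b * (b \<bullet> x)^2) \<ge> 0" using po0 by (intro sum_nonneg) simp
    have "(1 - \<alpha>) * (\<Sum>a\<in>Al. p0 a * (a \<bullet> x)^2) \<ge> 0" using S1 a1 by simp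
    moreover have "\<alpha> * (\<Sum>b\<in>A. pi_off b * (b \<bullet> x)^2) \<ge> 0" using S2 a0 by simp
    ultimately have z1: "(1 - \<alpha>) * (\<Sum>a\<in>Al. p0 a * (a \<bullet> x)^2) = 0"
      and z2: "\<alpha> * (\<Sum>b\<in>A. pi_off b * (b \<bullet> x)^2) = 0" using q0 by linarith+
    have "(\<Sum>a\<in>Al. p0 a * (a \<bullet> x)^2) = 0" using z1 a1 by simp
    hence "\<forall>a\<in>Al. p0 a * (a \<bullet> x)^2 = 0"
      using sum_nonneg_eq_0_iff[OF finAl, of "\<lambda>a. p0 a * (a \<bullet> x)^2"] p0nn by simp
    hence ax: "x \<bullet> a = 0" if "a \<in> Al" for a using that cpos by (simp add: p0_def inner_commute)
    define T where "T = (\<Sum>b\<in>A. pi_off b * (b \<bullet> b))"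
    have T0: "T \<ge> 0" unfolding T_def using po0 by (intro sum_nonneg) simp
    define Cc where "Cc = (\<Sum>a\<in>Al. a \<bullet> a) + T"
    have sAl0: "(\<Sum>a\<in>Al. a \<bullet> a) \<ge> 0" by (intro sum_nonneg) simp
    have Cc0: "Cc \<ge> 0" unfolding Cc_def using T0 sAl0 by simp
    define eps where "eps = 1 / (1 + Cc)"
    have eps0: "eps > 0" unfolding eps_def using Cc0 by simp
    have epsC: "eps * Cc < 1" unfolding eps_def using Cc0 by (simp add: field_simps)
    have d1: "real ?d \<ge> 1"
    proof -
      have "?d > 0" by simp
      thus ?thesis by linarith
    qed
    have "(INF H \<in> feas. - logdet H) = - \<infinity>"
    proof (rule ereal_bot)
      fix B :: real
      define s where "s = eps * exp (- B) / eps ^ ?d"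
      have s0: "s \<ge> 0" unfolding s_def using eps0 by simp
      define Hs where "Hs = eps *\<^sub>R mat 1 + s *\<^sub>R outer x"
      have Hquad: "y \<bullet> (Hs *v y) = eps * (y \<bullet> y) + s * (x \<bullet> y)^2" for y
        unfolding Hs_def
        by (simp add: matrix_vector_mult_add_rdistrib scaleR_matrix_vector_assoc[symmetric] inner_add_right outer_quad)
      have Hsym: "transpose Hs = Hs" unfolding Hs_def by (simp add: transpose_add' transpose_scalar outer_sym)
      have Hpd: "pos_def Hs" unfolding pos_def_def
      proof (intro conjI allI impI Hsym)
        fix y :: "real^'n" assume "y \<noteq> 0"
        hence "y \<bullet> y > 0" by simp
        hence "eps * (y \<bullet> y) > 0" using eps0 by simp
        moreover have "s * (x \<bullet> y)^2 \<ge> 0" using s0 by simp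
        ultimately show "y \<bullet> (Hs *v y) > 0" unfolding Hquad by linarith
      qed
      have tr1: "trace (Vmat pi_off A ** Hs) = (\<Sum>b\<in>A. pi_off b * (b \<bullet> (Hs *v b)))" by (rule Vmat_trace)
      also have "\<dots> = (\<Sum>b\<in>A. eps * (pi_off b * (b \<bullet> b)) + s * (pi_off b * (b \<bullet> x)^2))"
        unfolding Hquad by (rule sum.cong) (simp_all add: algebra_simps inner_commute[of x])
      also have "\<dots> = eps * T + s * (\<Sum>b\<in>A. pi_off b * (b \<bullet> x)^2)"
        unfolding T_def by (simp add: sum.distrib sum_distrib_left)
      finally have tr2: "\<alpha> * trace (Vmat pi_off A ** Hs) = \<alpha> * (eps * T) + s * (\<alpha> * (\<Sum>b\<in>A. pi_off b * (b \<bullet> x)^2))"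
        by (simp add: algebra_simps)
      hence tr3: "\<alpha> * trace (Vmat pi_off A ** Hs) = \<alpha> * (eps * T)" unfolding z2 by simp
      have "Hs \<in> feas" unfolding feas_def
      proof (intro CollectI conjI ballI Hpd)
        fix a assume a: "a \<in> Al"
        have "a \<bullet> (Hs *v a) = eps * (a \<bullet> a)" unfolding Hquad using ax[OF a] by simp
        moreover have "a \<bullet> a \<le> (\<Sum>a\<in>Al. a \<bullet> a)"
          by (rule member_le_sum[OF a]) (simp_all add: finAl)
        moreover have "a \<bullet> a \<ge> 0" by simp
        ultimately have "(1 - \<alpha>) * (a \<bullet> (Hs *v a)) + \<alpha> * (eps * T) \<le> eps * Cc"
        proof -
          assume e: "a \<bullet> (Hs *v a) = eps * (a \<bullet> a)" and le: "a \<bullet> a \<le> (\<Sum>a\<in>Al. a \<bullet> a)" and nn: "a \<bullet> a \<ge> 0"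
          have g0: "\<alpha> * (eps * (a \<bullet> a)) \<ge> 0" using eps0 nn a0 by simp
          have "(1 - \<alpha>) * (eps * (a \<bullet> a)) = eps * (a \<bullet> a) - \<alpha> * (eps * (a \<bullet> a))"
            by (simp add: algebra_simps)
          hence "(1 - \<alpha>) * (eps * (a \<bullet> a)) \<le> eps * (a \<bullet> a)" using g0 by linarith
          moreover have "\<alpha> * (eps * T) \<le> eps * T" using mult_right_mono[of \<alpha> 1 "eps * T"] eps0 T0 a1 by simp
          moreover have "eps * (a \<bullet> a) \<le> eps * (\<Sum>a\<in>Al. a \<bullet> a)" using le eps0 by simp
          ultimately show ?thesis unfolding e Cc_def by (simp add: distrib_left)
        qed
        thus "(1 - \<alpha>) * (a \<bullet> (Hs *v a)) + \<alpha> * trace (Vmat pi_off A ** Hs) \<le> real CARD('n)"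
          unfolding tr3 using epsC d1 by linarith
      qed
      hence "(INF H \<in> feas. - logdet H) \<le> - logdet Hs" by (rule INF_lower)
      also have "- logdet Hs \<le> ereal B"
      proof -
        obtain P lam where P: "orthogonal_matrix P" "Hs = P ** dmat lam ** transpose P"
          using spectral[OF Hsym] by blast
        define w where "w = x v* P"
        have lam: "lam$i = eps + s * (w$i)^2" for i
        proof -
          have "lam$i = (P *v axis i 1) \<bullet> (Hs *v (P *v axis i 1))" by (rule eigval_spec[OF P])
          also have "\<dots> = eps * ((P *v axis i 1) \<bullet> (P *v axis i 1)) + s * (x \<bullet> (P *v axis i 1))^2"
            by (rule Hquad)
          also have "(P *v axis i 1) \<bullet> (P *v axis i 1) = 1"
            using norm_axis_orth[OF P(1), of i] by (simp add: norm_eq_1)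
          also have "x \<bullet> (P *v axis i 1) = w \<bullet> axis i 1" unfolding w_def by (rule dot_lmul_matrix[symmetric])
          also have "w \<bullet> axis i 1 = w$i" by (simp add: inner_axis)
          finally show ?thesis by simp
        qed
        have sw: "(\<Sum>i\<in>UNIV. (w$i)^2) = 1"
        proof -
          have "w \<bullet> w = x \<bullet> x" using inner_orth[OF P(1), of x] unfolding w_def by simp
          thus ?thesis using xx by (simp add: inner_vec_def power2_eq_square)
        qed
        have "det Hs = (\<Prod>i\<in>UNIV. lam$i)" using P det_conj det_dmat by metis
        also have "\<dots> = (\<Prod>i\<in>UNIV. eps * (1 + (s / eps) * (w$i)^2))"
          unfolding lam using eps0 by (intro prod.cong) (simp_all add: field_simps)
        also have "\<dots> = eps ^ ?d * (\<Prod>i\<in>UNIV. 1 + (s / eps) * (w$i)^2)"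
          by (simp add: prod.distrib)
        finally have dH: "det Hs = eps ^ ?d * (\<Prod>i\<in>UNIV. 1 + (s / eps) * (w$i)^2)" .
        have "(\<Prod>i\<in>UNIV. 1 + (s / eps) * (w$i)^2) \<ge> 1 + (\<Sum>i\<in>UNIV. (s / eps) * (w$i)^2)"
          by (rule prod_ge_1_sum) (use s0 eps0 in simp_all)
        also have "(\<Sum>i\<in>UNIV. (s / eps) * (w$i)^2) = s / eps"
          by (simp only: sum_distrib_left[symmetric] sw mult_1_right)
        finally have "det Hs \<ge> eps ^ ?d * (1 + s / eps)" unfolding dH using eps0 by (simp add: mult_left_mono)
        also have "eps ^ ?d * (1 + s / eps) = eps ^ ?d + exp (- B)"
          unfolding s_def using eps0 by (simp add: field_simps)
        finally have dge: "det Hs \<ge> eps ^ ?d + exp (- B)" .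
        have ep: "eps ^ ?d > 0" using eps0 by simp
        hence dpos: "det Hs > 0" using dge by (smt (verit) exp_gt_zero)
        have "exp (- B) \<le> det Hs" using dge ep by linarith
        hence "ln (exp (- B)) \<le> ln (det Hs)" using dpos by (subst ln_le_cancel_iff) auto
        hence "- ln (det Hs) \<le> B" by simp
        thus ?thesis unfolding logdet_def using dpos by simp
      qed
      finally show "(INF H \<in> feas. - logdet H) \<le> ereal B" .
    qed
    thus ?thesis by simp
  qed
  show ?thesis using weak strong primal_eq dual_eq by simp
qed


end
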